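(* Let $I$ be a nonempty set and $H$ a real Hilbert space; for each $i\in I$ let $C_i$ be a nonempty compact convex subset of $H$. Equip $H^I$ with the product topology generated by the norm topology on each factor $H$. Let $S=\mathbb{R}^+=[0,\infty)$ (under addition) and for each $i\in I$ let $\mathcal{S}_i=\{T_{t,i}:t\in\mathbb{R}^+\}$ be a representation of $\mathbb{R}^+$ as nonexpansive mappings from $C_i$ into itself with $\mathrm{Fix}(\mathcal{S}_i)\neq\emptyset$. Let $X$ be a left invariant subspace of $C(\mathbb{R}^+)$ with $1\in X$, such that for every $i\in I$, $x\in C_i$, $y\in H$ the function $t\mapsto\langle T_{t,i}x,y\rangle$ belongs to $X$. For each $i\in I$ let $f_i:C_i\to C_i$ be an $\alpha_i$-contraction ($0\le\alpha_i<1$). Let $\{\epsilon_n\}\subseteq(0,1)$ with $\lim_n\epsilon_n=0$ and $\{a_n\}\subseteq(0,\infty)$ with $\lim_na_n=\infty$. Then for each $i\in I$ there exist a unique sunny nonexpansive retraction $P_i$ of $C_i$ onto $\mathrm{Fix}(\mathcal{S}_i)$ and a point $x_i\in C_i$ such that the sequence $\{g_n\}$ in $H^I$ defined by $g_n(i)=z_{n,i}$ $(i\in I)$, where $z_{n,i}\in C_i$ satisfies $$z_{n,i}=\epsilon_nf_i(z_{n,i})+(1-\epsilon_n)\frac1{a_n}\int_0^{a_n}T_{t,i}z_{n,i}\,dt,$$ converges in the product topology of $H^I$ to the function $g:I\to H$ defined by $g(i)=P_ix_i$.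
   Context: A family $\{T_t:t\in\mathbb{R}^+\}$ of self-maps of $C$ is a representation of $\mathbb{R}^+$ as nonexpansive mappings if $T_{s+t}x=T_sT_tx$ for all $s,t\ge0$, $x\in C$, and each $T_t$ is nonexpansive; $\mathrm{Fix}(\mathcal{S})=\bigcap_t\{x:T_tx=x\}$. A subspace $X\subseteq C(\mathbb{R}^+)$ (bounded continuous functions) is left invariant if $t\mapsto h(s+t)$ lies in $X$ whenever $h\in X$, $s\ge0$. The integral $\frac1{a}\int_0^{a}T_{t,i}z\,dt$ denotes the unique $w\in H$ with $\langle w,y\rangle=\frac1a\int_0^a\langle T_{t,i}z,y\rangle\,dt$ for all $y\in H$. A retraction $P$ of $C$ onto $D$ is sunny if $P(Px+t(x-Px))=Px$ whenever $x\in C$, $t\ge0$, $Px+t(x-Px)\in C$. *)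

theory Defs
  imports "HOL-Analysis.Analysis"
begin

text \<open>A real Hilbert space is a complete real inner product space:
  we use a type of class real_inner and complete_space.\<close>

definition nonexpansive_on :: "'a::metric_space set \<Rightarrow> ('a \<Rightarrow> 'a) \<Rightarrow> bool" where
  "nonexpansive_on C T \<longleftrightarrow> (\<forall>x\<in>C. \<forall>y\<in>C. dist (T x) (T y) \<le> dist x y)"

text \<open>Representation of the additive semigroup [0,inf) as nonexpansive self-maps of C.
  T t is only meaningful for t \<ge> 0.\<close>
definition nonexp_semigroup_rep :: "'a::real_normed_vector set \<Rightarrow> (real \<Rightarrow> 'a \<Rightarrow> 'a) \<Rightarrow> bool" where
  "nonexp_semigroup_rep C T \<longleftrightarrow>
     (\<forall>t\<ge>0. T t ` C \<subseteq> C \<and> nonexpansive_on C (T t)) \<and>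
     (\<forall>s\<ge>0. \<forall>t\<ge>0. \<forall>x\<in>C. T (s + t) x = T s (T t x))"

definition Fix_rep :: "'a set \<Rightarrow> (real \<Rightarrow> 'a \<Rightarrow> 'a) \<Rightarrow> 'a set" where
  "Fix_rep C T = {x \<in> C. \<forall>t\<ge>0. T t x = x}"

text \<open>Functions on R+ are represented by functions real => real; only their values
  on [0,inf) matter. "h is in X" means some element of X agrees with h on [0,inf).\<close>
definition in_fnspace :: "(real \<Rightarrow> real) set \<Rightarrow> (real \<Rightarrow> real) \<Rightarrow> bool" where
  "in_fnspace X h \<longleftrightarrow> (\<exists>g\<in>X. \<forall>t\<ge>0. g t = h t)"

definition bcont_Rplus :: "(real \<Rightarrow> real) set" where
  "bcont_Rplus = {h. continuous_on {0..} h \<and> bounded (h ` {0..})}"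

definition left_invariant_subspace :: "(real \<Rightarrow> real) set \<Rightarrow> bool" where
  "left_invariant_subspace X \<longleftrightarrow>
     X \<subseteq> bcont_Rplus \<and>
     in_fnspace X (\<lambda>t. 0) \<and>
     (\<forall>g\<in>X. \<forall>h\<in>X. in_fnspace X (\<lambda>t. g t + h t)) \<and>
     (\<forall>g\<in>X. \<forall>c::real. in_fnspace X (\<lambda>t. c * g t)) \<and>
     (\<forall>h\<in>X. \<forall>s\<ge>0. in_fnspace X (\<lambda>t. h (s + t)))"

text \<open>The weak integral (1/a) int_0^a T t z dt: the unique w with
  <w,y> = (1/a) int_0^a <T t z, y> dt for all y.\<close>
definition avg_integral :: "(real \<Rightarrow> 'a::real_inner \<Rightarrow> 'a) \<Rightarrow> real \<Rightarrow> 'a \<Rightarrow> 'a" where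
  "avg_integral T a z = (THE w. \<forall>y. inner w y = (1 / a) * integral {0..a} (\<lambda>t. inner (T t z) y))"

definition contraction_on :: "'a::metric_space set \<Rightarrow> real \<Rightarrow> ('a \<Rightarrow> 'a) \<Rightarrow> bool" where
  "contraction_on C \<alpha> f \<longleftrightarrow> 0 \<le> \<alpha> \<and> \<alpha> < 1 \<and> f ` C \<subseteq> C \<and>
     (\<forall>x\<in>C. \<forall>y\<in>C. dist (f x) (f y) \<le> \<alpha> * dist x y)"

definition sunny_nonexp_retraction :: "'a::real_normed_vector set \<Rightarrow> 'a set \<Rightarrow> ('a \<Rightarrow> 'a) \<Rightarrow> bool" where
  "sunny_nonexp_retraction C D P \<longleftrightarrow>
     D \<subseteq> C \<and> P ` C \<subseteq> D \<and> (\<forall>x\<in>D. P x = x) \<and> nonexpansive_on C P \<and>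
     (\<forall>x\<in>C. \<forall>t\<ge>0. P x + t *\<^sub>R (x - P x) \<in> C \<longrightarrow> P (P x + t *\<^sub>R (x - P x)) = P x)"

end

theory Submission
  imports Defs "HOL-Analysis.Analysis"
begin

lemma small_t_nonneg:
  fixes A B :: real
  assumes "\<And>t. 0 < t \<Longrightarrow> t \<le> 1 \<Longrightarrow> 0 \<le> A + t * B"
  shows "0 \<le> A"
proof (rule ccontr)
  assume "\<not> 0 \<le> A"
  then have A: "A < 0" by simp
  define t where "t = min 1 (- A / (2 * (\<bar>B\<bar> + 1)))"
  have "0 < - A / (2 * (\<bar>B\<bar> + 1))" using A by (intro divide_pos_pos) auto
  then have t0: "0 < t" by (simp add: t_def)
  have t1: "t \<le> 1" by (simp add: t_def)
  have "t * B \<le> t * \<bar>B\<bar>" using t0 by (simp add: mult_left_mono)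
  also have "\<dots> \<le> (- A / (2 * (\<bar>B\<bar> + 1))) * \<bar>B\<bar>"
    by (rule mult_right_mono) (auto simp: t_def)
  also have "\<dots> < - A"
  proof -
    have "(- A / (2 * (\<bar>B\<bar> + 1))) * \<bar>B\<bar> = - A * (\<bar>B\<bar> / (2 * (\<bar>B\<bar> + 1)))" by simp
    also have "\<bar>B\<bar> / (2 * (\<bar>B\<bar> + 1)) < 1" by (simp add: field_simps)
    then have "- A * (\<bar>B\<bar> / (2 * (\<bar>B\<bar> + 1))) < - A * 1"
      using A by (intro mult_strict_left_mono) auto
    finally show ?thesis by simp
  qed
  finally have "A + t * B < 0" by simp
  with assms[OF t0 t1] show False by simp
qed

lemma norm_diff_scale_sq:
  fixes a b :: "'a::real_inner"
  shows "(norm (a - t *\<^sub>R b))\<^sup>2 = (norm a)\<^sup>2 - 2 * t * inner a b + t\<^sup>2 * (norm b)\<^sup>2"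
  unfolding power2_norm_eq_inner
  by (simp add: inner_diff_left inner_diff_right inner_commute algebra_simps power2_eq_square)

lemma norm_add_scale_sq:
  fixes a b :: "'a::real_inner"
  shows "(norm (a + t *\<^sub>R b))\<^sup>2 = (norm a)\<^sup>2 + 2 * t * inner a b + t\<^sup>2 * (norm b)\<^sup>2"
  unfolding power2_norm_eq_inner
  by (simp add: inner_add_left inner_add_right inner_commute algebra_simps power2_eq_square)

definition VI :: "'a::real_inner set \<Rightarrow> 'a \<Rightarrow> 'a \<Rightarrow> bool" where
  "VI F x c \<longleftrightarrow> c \<in> F \<and> (\<forall>y\<in>F. inner (x - c) (y - c) \<le> 0)"

lemma VI_exists:
  fixes F :: "'a::real_inner set"
  assumes "compact F" "convex F" "F \<noteq> {}"
  shows "\<exists>c. VI F x c"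
proof -
  have "continuous_on F (\<lambda>y. norm (x - y))" by (intro continuous_intros)
  then obtain c where c: "c \<in> F" and min: "\<And>y. y \<in> F \<Longrightarrow> norm (x - c) \<le> norm (x - y)"
    using continuous_attains_inf[OF assms(1,3)] by blast
  have "inner (x - c) (y - c) \<le> 0" if y: "y \<in> F" for y
  proof -
    have "0 \<le> - 2 * inner (x - c) (y - c) + t * (norm (y - c))\<^sup>2" if t: "0 < t" "t \<le> 1" for t
    proof -
      have "c + t *\<^sub>R (y - c) = (1 - t) *\<^sub>R c + t *\<^sub>R y" by (simp add: algebra_simps)
      also have "\<dots> \<in> F" using assms(2) c y t unfolding convex_def by auto
      finally have "norm (x - c) \<le> norm (x - (c + t *\<^sub>R (y - c)))" using min by blast
      then have "(norm (x - c))\<^sup>2 \<le> (norm ((x - c) - t *\<^sub>R (y - c)))\<^sup>2"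
        by (simp add: algebra_simps power_mono)
      then have "0 \<le> - 2 * t * inner (x - c) (y - c) + t\<^sup>2 * (norm (y - c))\<^sup>2"
        by (simp add: norm_diff_scale_sq)
      then have "0 \<le> t * (- 2 * inner (x - c) (y - c) + t * (norm (y - c))\<^sup>2)"
        by (simp add: algebra_simps power2_eq_square)
      then show ?thesis using t by (simp add: zero_le_mult_iff)
    qed
    then have "0 \<le> - 2 * inner (x - c) (y - c)" by (rule small_t_nonneg)
    then show ?thesis by simp
  qed
  then show ?thesis using c unfolding VI_def by blast
qed

lemma VI_unique:
  assumes "VI F x c" "VI F x d"
  shows "c = d"
proof -
  have "inner (x - c) (d - c) \<le> 0" "inner (x - d) (c - d) \<le> 0" using assms unfolding VI_def by auto
  then have "inner (d - c) (d - c) \<le> 0"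
    by (simp add: inner_diff_left inner_diff_right inner_commute algebra_simps)
  then have "d - c = 0" by (metis inner_eq_zero_iff order_antisym inner_ge_zero)
  then show ?thesis by simp
qed

definition proj :: "'a::real_inner set \<Rightarrow> 'a \<Rightarrow> 'a" where
  "proj F x = (THE c. VI F x c)"

lemma proj_eq:
  assumes "VI F x c" shows "proj F x = c"
  unfolding proj_def using assms VI_unique by blast

lemma proj_VI:
  fixes F :: "'a::real_inner set"
  assumes "compact F" "convex F" "F \<noteq> {}"
  shows "VI F x (proj F x)"
  using VI_exists[OF assms] proj_eq by metis

lemma proj_in:
  fixes F :: "'a::real_inner set"
  assumes "compact F" "convex F" "F \<noteq> {}"
  shows "proj F x \<in> F"
  using proj_VI[OF assms] unfolding VI_def by blast

lemma proj_id:
  fixes F :: "'a::real_inner set"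
  assumes "x \<in> F"
  shows "proj F x = x"
  by (rule proj_eq) (simp add: VI_def assms)

lemma proj_nonexp:
  fixes F :: "'a::real_inner set"
  assumes "compact F" "convex F" "F \<noteq> {}"
  shows "dist (proj F x) (proj F y) \<le> dist x y"
proof -
  let ?p = "proj F x" and ?q = "proj F y"
  have "inner (x - ?p) (?q - ?p) \<le> 0" "inner (y - ?q) (?p - ?q) \<le> 0"
    using proj_VI[OF assms, of x] proj_VI[OF assms, of y] unfolding VI_def by auto
  then have "inner (?p - ?q) (?p - ?q) \<le> inner (x - y) (?p - ?q)"
    by (simp add: inner_diff_left inner_diff_right inner_commute algebra_simps)
  also have "\<dots> \<le> norm (x - y) * norm (?p - ?q)" by (rule norm_cauchy_schwarz)
  finally have "(norm (?p - ?q))\<^sup>2 \<le> norm (x - y) * norm (?p - ?q)"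
    by (simp add: power2_norm_eq_inner)
  then have "norm (?p - ?q) \<le> norm (x - y)"
    by (metis mult_right_le_imp_le norm_ge_zero power2_eq_square zero_less_norm_iff
        norm_zero)
  then show ?thesis by (simp add: dist_norm)
qed

lemma proj_sunny:
  fixes F :: "'a::real_inner set"
  assumes "compact F" "convex F" "F \<noteq> {}" "0 \<le> t"
  shows "proj F (proj F x + t *\<^sub>R (x - proj F x)) = proj F x"
proof (rule proj_eq)
  let ?p = "proj F x"
  have "VI F x ?p" by (rule proj_VI[OF assms(1-3)])
  then show "VI F (?p + t *\<^sub>R (x - ?p)) ?p"
    unfolding VI_def using assms(4)
    by (auto simp: mult_nonneg_nonpos)
qed


lemma proj_sunny_retraction:
  fixes F :: "'a::real_inner set"
  assumes "compact F" "convex F" "F \<noteq> {}" "F \<subseteq> C"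
  shows "sunny_nonexp_retraction C F (proj F)"
  unfolding sunny_nonexp_retraction_def nonexpansive_on_def
  using assms proj_in[OF assms(1-3)] proj_id proj_nonexp[OF assms(1-3)] proj_sunny[OF assms(1-3)]
  by auto

lemma sunny_unique:
  fixes F :: "'a::real_inner set"
  assumes S: "sunny_nonexp_retraction C F Q" and cC: "convex C" and x: "x \<in> C"
  shows "Q x = proj F x"
proof (rule proj_eq[symmetric])
  have FC: "F \<subseteq> C" and QF: "Q ` C \<subseteq> F" and Qid: "\<And>y. y \<in> F \<Longrightarrow> Q y = y"
    and ne: "nonexpansive_on C Q"
    and sun: "\<And>x t. x \<in> C \<Longrightarrow> 0 \<le> t \<Longrightarrow> Q x + t *\<^sub>R (x - Q x) \<in> C \<Longrightarrow> Q (Q x + t *\<^sub>R (x - Q x)) = Q x"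
    using S unfolding sunny_nonexp_retraction_def by auto
  have Qx: "Q x \<in> F" using QF x by auto
  have "inner (x - Q x) (y - Q x) \<le> 0" if y: "y \<in> F" for y
  proof -
    have "0 \<le> 2 * inner (x - Q x) (Q x - y) + t * (norm (x - Q x))\<^sup>2" if t: "0 < t" "t \<le> 1" for t
    proof -
      let ?xt = "Q x + t *\<^sub>R (x - Q x)"
      have "?xt = (1 - t) *\<^sub>R Q x + t *\<^sub>R x" by (simp add: algebra_simps)
      also have "\<dots> \<in> C" using cC x Qx FC t unfolding convex_def by auto
      finally have xt: "?xt \<in> C" .
      have "dist (Q ?xt) (Q y) \<le> dist ?xt y" using ne xt y FC unfolding nonexpansive_on_def by auto
      then have "norm (Q x - y) \<le> norm ((Q x - y) + t *\<^sub>R (x - Q x))"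
        using sun[OF x _ xt] t Qid[OF y] by (simp add: dist_norm algebra_simps)
      then have "(norm (Q x - y))\<^sup>2 \<le> (norm ((Q x - y) + t *\<^sub>R (x - Q x)))\<^sup>2"
        by (simp add: power_mono)
      then have "0 \<le> 2 * t * inner (Q x - y) (x - Q x) + t\<^sup>2 * (norm (x - Q x))\<^sup>2"
        by (simp add: norm_add_scale_sq)
      then have "0 \<le> t * (2 * inner (x - Q x) (Q x - y) + t * (norm (x - Q x))\<^sup>2)"
        by (simp add: algebra_simps power2_eq_square inner_commute)
      then show ?thesis using t by (simp add: zero_le_mult_iff)
    qed
    then have "0 \<le> 2 * inner (x - Q x) (Q x - y)" by (rule small_t_nonneg)
    then show ?thesis by (simp add: inner_diff_right)
  qed
  then show "VI F x (Q x)" unfolding VI_def using Qx by blast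
qed


typedef (overloaded) 'a hw = "UNIV :: 'a::{real_inner,complete_space} set" by simp
setup_lifting type_definition_hw

instantiation hw :: ("{real_inner,complete_space}") real_normed_vector
begin
lift_definition zero_hw :: "'a hw" is 0 .
lift_definition plus_hw :: "'a hw \<Rightarrow> 'a hw \<Rightarrow> 'a hw" is "(+)" .
lift_definition minus_hw :: "'a hw \<Rightarrow> 'a hw \<Rightarrow> 'a hw" is "(-)" .
lift_definition uminus_hw :: "'a hw \<Rightarrow> 'a hw" is uminus .
lift_definition scaleR_hw :: "real \<Rightarrow> 'a hw \<Rightarrow> 'a hw" is scaleR .
lift_definition norm_hw :: "'a hw \<Rightarrow> real" is norm .
lift_definition dist_hw :: "'a hw \<Rightarrow> 'a hw \<Rightarrow> real" is dist .
lift_definition sgn_hw :: "'a hw \<Rightarrow> 'a hw" is sgn .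
definition uniformity_hw :: "('a hw \<times> 'a hw) filter" where
  "uniformity_hw = (INF e\<in>{0<..}. principal {(x::'a hw, y). dist x y < e})"
definition open_hw :: "'a hw set \<Rightarrow> bool" where
  "open_hw U = (\<forall>x\<in>U. \<forall>\<^sub>F (x', y) in (uniformity :: ('a hw \<times> 'a hw) filter). x' = x \<longrightarrow> y \<in> U)"
instance
  apply intro_classes
  apply (simp_all only: uniformity_hw_def open_hw_def)
  apply (transfer, simp add: algebra_simps scaleR_add_right scaleR_add_left dist_norm sgn_div_norm norm_triangle_ineq)+
  done
end

instance hw :: ("{real_inner,complete_space}") banach
proof
  fix X :: "nat \<Rightarrow> 'a hw"
  assume "Cauchy X"
  then have "Cauchy (\<lambda>n. Rep_hw (X n))"
    unfolding Cauchy_def by (simp add: dist_hw.rep_eq)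
  then obtain l where "(\<lambda>n. Rep_hw (X n)) \<longlonglongrightarrow> l" using convergent_def Cauchy_convergent by blast
  then have "X \<longlonglongrightarrow> Abs_hw l"
    unfolding LIMSEQ_def by (simp add: dist_hw.rep_eq Abs_hw_inverse)
  then show "convergent X" by (auto simp: convergent_def)
qed

lemma weak_integral_exists:
  fixes g :: "real \<Rightarrow> 'a::{real_inner,complete_space}"
  assumes c: "continuous_on {a..b} g"
  shows "\<exists>w. \<forall>y. inner w y = integral {a..b} (\<lambda>t. inner (g t) y)"
proof -
  let ?G = "\<lambda>t. Abs_hw (g t)"
  have cG: "continuous_on {a..b} ?G"
    unfolding continuous_on_iff
  proof (intro ballI allI impI)
    fix x e assume x: "x \<in> {a..b}" and e: "(0::real) < e"
    then obtain d where "d > 0" "\<forall>x'\<in>{a..b}. dist x' x < d \<longrightarrow> dist (g x') (g x) < e"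
      using c unfolding continuous_on_iff by blast
    then show "\<exists>d>0. \<forall>x'\<in>{a..b}. dist x' x < d \<longrightarrow> dist (?G x') (?G x) < e"
      by (auto simp: dist_hw.rep_eq Abs_hw_inverse)
  qed
  have int: "?G integrable_on {a..b}" by (rule integrable_continuous_interval[OF cG])
  show ?thesis
  proof (intro exI allI)
    fix y
    have bl: "bounded_linear (\<lambda>v::'a hw. inner (Rep_hw v) y)"
    proof (rule bounded_linear_intro[where K = "norm y"])
      fix u v :: "'a hw" and r :: real
      show "inner (Rep_hw (u + v)) y = inner (Rep_hw u) y + inner (Rep_hw v) y"
        by (simp add: plus_hw.rep_eq inner_add_left)
      show "inner (Rep_hw (r *\<^sub>R u)) y = r *\<^sub>R inner (Rep_hw u) y"
        by (simp add: scaleR_hw.rep_eq)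
      show "norm (inner (Rep_hw u) y) \<le> norm u * norm y"
        using norm_cauchy_schwarz[of "Rep_hw u" y] by (simp add: norm_hw.rep_eq Cauchy_Schwarz_ineq2)
    qed
    have "integral {a..b} ((\<lambda>v::'a hw. inner (Rep_hw v) y) \<circ> ?G) = inner (Rep_hw (integral {a..b} ?G)) y"
      by (rule integral_linear[OF int bl])
    then show "inner (Rep_hw (integral {a..b} ?G)) y = integral {a..b} (\<lambda>t. inner (g t) y)"
      by (simp add: o_def Abs_hw_inverse)
  qed
qed


lemma compact_subseq_limit:
  fixes x :: "nat \<Rightarrow> 'a::metric_space"
  assumes K: "compact K" and xK: "\<And>n. x n \<in> K"
    and sub: "\<And>r l. strict_mono r \<Longrightarrow> (x \<circ> r) \<longlonglongrightarrow> l \<Longrightarrow> l = p"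
  shows "x \<longlonglongrightarrow> p"
proof (rule ccontr)
  assume "\<not> x \<longlonglongrightarrow> p"
  then obtain e where e: "e > 0" and fr: "\<not> (\<exists>N. \<forall>n\<ge>N. dist (x n) p < e)"
    unfolding LIMSEQ_def by blast
  have inf: "infinite {n. \<not> dist (x n) p < e}"
    unfolding infinite_nat_iff_unbounded_le using fr by (meson not_le_imp_less mem_Collect_eq)
  then obtain r :: "nat \<Rightarrow> nat" where r: "strict_mono r" and rn: "\<And>n. r n \<in> {n. \<not> dist (x n) p < e}"
    using infinite_enumerate[OF inf] by blast
  have "seq_compact K" using K compact_imp_seq_compact by blast
  then obtain l s where s: "strict_mono s" and ls: "((x \<circ> r) \<circ> s) \<longlonglongrightarrow> l"
    using seq_compactE[of K "x \<circ> r"] xK by (metis comp_apply)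
  have "strict_mono (r \<circ> s)" using r s strict_mono_o by blast
  then have "l = p" using sub[of "r \<circ> s" l] ls by (simp add: o_assoc)
  then obtain N where "\<forall>n\<ge>N. dist (((x \<circ> r) \<circ> s) n) p < e"
    using ls e unfolding LIMSEQ_def by blast
  then have "dist (x (r (s N))) p < e" by simp
  with rn[of "s N"] show False by simp
qed

lemma inner_all_eq:
  fixes u v :: "'a::real_inner"
  assumes "\<And>y. inner u y = inner v y"
  shows "u = v"
proof -
  have "inner (u - v) (u - v) = 0" using assms[of "u - v"] by (simp add: inner_diff_left)
  then show ?thesis by simp
qed

lemma weak_cont:
  fixes g :: "real \<Rightarrow> 'a::real_inner"
  assumes K: "compact K" and gK: "\<And>t. t \<ge> 0 \<Longrightarrow> g t \<in> K"
    and wc: "\<And>y. continuous_on {0..} (\<lambda>t. inner (g t) y)"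
  shows "continuous_on {0..} g"
proof (rule continuous_on_sequentiallyI)
  fix s :: "nat \<Rightarrow> real" and a
  assume H1: "\<forall>n. s n \<in> {0..}" and H2: "a \<in> {0..}" and H3: "s \<longlonglongrightarrow> a"
  then have H: "a \<in> {0..} \<and> (\<forall>n. s n \<in> {0..}) \<and> s \<longlonglongrightarrow> a" by blast
  have "(g \<circ> s) \<longlonglongrightarrow> g a"
  proof (rule compact_subseq_limit[OF K])
    show "(g \<circ> s) n \<in> K" for n using H gK by auto
    fix r l assume r: "strict_mono r" and l: "((g \<circ> s) \<circ> r) \<longlonglongrightarrow> l"
    show "l = g a"
    proof (rule inner_all_eq)
      fix y
      have "(\<lambda>n. inner (((g \<circ> s) \<circ> r) n) y) \<longlonglongrightarrow> inner l y"
        using l by (intro tendsto_intros)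
      moreover have "(\<lambda>n. inner (((g \<circ> s) \<circ> r) n) y) \<longlonglongrightarrow> inner (g a) y"
      proof -
        have "((\<lambda>t. inner (g t) y) \<circ> (s \<circ> r)) \<longlonglongrightarrow> inner (g a) y"
          using wc[of y] H LIMSEQ_subseq_LIMSEQ[OF _ r, of s a]
          unfolding continuous_on_sequentially by auto
        then show ?thesis by (simp add: o_def)
      qed
      ultimately show "inner l y = inner (g a) y" using LIMSEQ_unique by blast
    qed
  qed
  then show "(\<lambda>n. g (s n)) \<longlonglongrightarrow> g a" by (simp add: o_def)
qed


lemma sq_expand:
  fixes p u y :: "'a::real_inner"
  shows "(norm (p - y))\<^sup>2 = (norm (p - u))\<^sup>2 + (2 * inner p (u - y) + ((norm (u - y))\<^sup>2 - 2 * inner u (u - y)))"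
  unfolding power2_norm_eq_inner
  by (simp add: inner_diff_left inner_diff_right inner_commute algebra_simps)

locale sgrp =
  fixes C :: "'a::{real_inner,complete_space} set" and T :: "real \<Rightarrow> 'a \<Rightarrow> 'a"
  assumes cC: "compact C" and cvC: "convex C" and neC: "C \<noteq> {}"
    and rep: "nonexp_semigroup_rep C T"
    and wc: "\<And>x y. x \<in> C \<Longrightarrow> continuous_on {0..} (\<lambda>t. inner (T t x) y)"
begin

lemma Tin: "0 \<le> t \<Longrightarrow> x \<in> C \<Longrightarrow> T t x \<in> C"
  using rep unfolding nonexp_semigroup_rep_def by blast

lemma Tne: "0 \<le> t \<Longrightarrow> x \<in> C \<Longrightarrow> y \<in> C \<Longrightarrow> dist (T t x) (T t y) \<le> dist x y"
  using rep unfolding nonexp_semigroup_rep_def nonexpansive_on_def by blast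

lemma Tsg: "0 \<le> s \<Longrightarrow> 0 \<le> t \<Longrightarrow> x \<in> C \<Longrightarrow> T (s + t) x = T s (T t x)"
  using rep unfolding nonexp_semigroup_rep_def by blast

lemma Tcontx: "0 \<le> t \<Longrightarrow> continuous_on C (T t)"
  by (rule lipschitz_on_continuous_on[of 1]) (auto simp: lipschitz_on_def Tne)

lemma Tcont: "x \<in> C \<Longrightarrow> continuous_on {0..} (\<lambda>t. T t x)"
  by (rule weak_cont[OF cC]) (auto intro: Tin wc)

lemma Tcont_ab: "x \<in> C \<Longrightarrow> continuous_on {0..a} (\<lambda>t. T t x)"
  by (rule continuous_on_subset[OF Tcont]) auto

lemma inner_int: "x \<in> C \<Longrightarrow> (\<lambda>t. inner (T t x) y) integrable_on {0..a}"
  by (rule integrable_continuous_interval) (intro continuous_intros Tcont_ab)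

lemma A_char: "x \<in> C \<Longrightarrow> inner (avg_integral T a x) y = (1/a) * integral {0..a} (\<lambda>t. inner (T t x) y)"
proof -
  assume x: "x \<in> C"
  obtain w where w: "\<forall>y. inner w y = integral {0..a} (\<lambda>t. inner (T t x) y)"
    using weak_integral_exists[OF Tcont_ab[OF x]] by blast
  have P: "\<forall>y. inner ((1/a) *\<^sub>R w) y = (1/a) * integral {0..a} (\<lambda>t. inner (T t x) y)"
    using w by simp
  have eq: "avg_integral T a x = (1/a) *\<^sub>R w"
    unfolding avg_integral_def
  proof (rule the_equality)
    show "\<forall>y. inner ((1/a) *\<^sub>R w) y = 1 / a * integral {0..a} (\<lambda>t. inner (T t x) y)" by (rule P)
    fix v assume hv: "\<forall>y. inner v y = 1 / a * integral {0..a} (\<lambda>t. inner (T t x) y)"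
    show "v = (1/a) *\<^sub>R w" by (rule inner_all_eq) (simp only: hv P)
  qed
  show ?thesis unfolding eq using P by blast
qed

lemma A_int_eq: "x \<in> C \<Longrightarrow> 0 < a \<Longrightarrow> integral {0..a} (\<lambda>t. inner (T t x) y) = a * inner (avg_integral T a x) y"
  using A_char[of x a y] by simp

lemma A_in:
  assumes a: "0 < a" and x: "x \<in> C"
  shows "avg_integral T a x \<in> C"
proof -
  let ?u = "avg_integral T a x"
  let ?c = "proj C ?u"
  have VIc: "VI C ?u ?c" by (rule proj_VI[OF cC cvC neC])
  have "integral {0..a} (\<lambda>t. inner (T t x) (?u - ?c) - inner ?c (?u - ?c)) \<le> integral {0..a} (\<lambda>t. 0)"
  proof (rule integral_le)
    show "(\<lambda>t. inner (T t x) (?u - ?c) - inner ?c (?u - ?c)) integrable_on {0..a}"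
      by (rule integrable_continuous_interval) (intro continuous_intros Tcont_ab x)
    fix t assume "t \<in> {0..a}"
    then have "inner (?u - ?c) (T t x - ?c) \<le> 0" using VIc Tin x unfolding VI_def by auto
    then show "inner (T t x) (?u - ?c) - inner ?c (?u - ?c) \<le> 0"
      by (simp add: inner_diff_right inner_commute)
  qed (rule integrable_const_ivl)
  moreover have "integral {0..a} (\<lambda>t. inner (T t x) (?u - ?c) - inner ?c (?u - ?c))
      = a * inner ?u (?u - ?c) - a * inner ?c (?u - ?c)"
    using a by (simp add: integral_diff[OF inner_int[OF x] integrable_const_ivl] A_int_eq[OF x a])
  ultimately have "a * inner (?u - ?c) (?u - ?c) \<le> 0"
    by (simp add: inner_diff_left algebra_simps)
  then have "inner (?u - ?c) (?u - ?c) \<le> 0" using a by (simp add: mult_le_0_iff)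
  then have "?u - ?c = 0" by (metis inner_eq_zero_iff order_antisym inner_ge_zero)
  then have "?u = ?c" by simp
  then show ?thesis using VIc unfolding VI_def by simp
qed

lemma A_ne:
  assumes a: "0 < a" and x: "x \<in> C" and y: "y \<in> C"
  shows "dist (avg_integral T a x) (avg_integral T a y) \<le> dist x y"
proof -
  let ?d = "avg_integral T a x - avg_integral T a y"
  have hx: "integral {0..a} (\<lambda>t. inner (T t x) ?d) = a * inner (avg_integral T a x) ?d"
    by (rule A_int_eq[OF x a])
  have hy: "integral {0..a} (\<lambda>t. inner (T t y) ?d) = a * inner (avg_integral T a y) ?d"
    by (rule A_int_eq[OF y a])
  have "a * inner ?d ?d = integral {0..a} (\<lambda>t. inner (T t x) ?d) - integral {0..a} (\<lambda>t. inner (T t y) ?d)"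
    unfolding hx hy by (simp only: inner_diff_left right_diff_distrib)
  also have "\<dots> = integral {0..a} (\<lambda>t. inner (T t x - T t y) ?d)"
    by (simp add: integral_diff[OF inner_int[OF x] inner_int[OF y]] inner_diff_left)
  also have "\<dots> \<le> integral {0..a} (\<lambda>t. dist x y * norm ?d)"
  proof (rule integral_le)
    show "(\<lambda>t. inner (T t x - T t y) ?d) integrable_on {0..a}"
      by (rule integrable_continuous_interval) (intro continuous_intros Tcont_ab x y)
    fix t assume t: "t \<in> {0..a}"
    have "inner (T t x - T t y) ?d \<le> norm (T t x - T t y) * norm ?d" by (rule norm_cauchy_schwarz)
    also have "\<dots> \<le> dist x y * norm ?d"
      using Tne[of t x y] t x y by (intro mult_right_mono) (auto simp: dist_norm)
    finally show "inner (T t x - T t y) ?d \<le> dist x y * norm ?d" .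
  qed (rule integrable_const_ivl)
  also have "\<dots> = a * (dist x y * norm ?d)" using a by simp
  finally have "inner ?d ?d \<le> dist x y * norm ?d" using a by simp
  then have "norm ?d * norm ?d \<le> dist x y * norm ?d" by (simp add: power2_eq_square[symmetric] power2_norm_eq_inner)
  then have "norm ?d \<le> dist x y"
    by (metis mult_right_le_imp_le norm_ge_zero zero_less_norm_iff norm_zero zero_le_dist)
  then show ?thesis by (simp add: dist_norm)
qed

end

lemma conv_identity:
  fixes w x y :: "'a::real_inner"
  assumes "u + v = 1"
  shows "(norm (w - (u *\<^sub>R x + v *\<^sub>R y)))\<^sup>2 = u * (norm (w - x))\<^sup>2 + v * (norm (w - y))\<^sup>2 - u * v * (norm (x - y))\<^sup>2"
proof -
  have v: "v = 1 - u" using assms by simp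
  show ?thesis unfolding v power2_norm_eq_inner
    by (simp add: inner_diff_left inner_diff_right inner_add_left inner_add_right inner_commute algebra_simps)
qed

context sgrp
begin

abbreviation "F \<equiv> Fix_rep C T"

lemma F_sub: "F \<subseteq> C" by (auto simp: Fix_rep_def)

lemma F_fix: "q \<in> F \<Longrightarrow> 0 \<le> t \<Longrightarrow> T t q = q" by (auto simp: Fix_rep_def)

lemma F_closed: "closed F"
  unfolding closed_sequential_limits
proof (intro allI impI, elim conjE)
  fix x l assume xF: "\<forall>n. x n \<in> F" and lim: "x \<longlonglongrightarrow> l"
  have "closed C" using cC by (rule compact_imp_closed)
  then have lC: "l \<in> C" using xF F_sub lim unfolding closed_sequential_limits by blast
  have "T t l = l" if t: "0 \<le> t" for t
  proof -
    have "(\<lambda>n. T t (x n)) \<longlonglongrightarrow> T t l"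
      by (rule continuous_on_tendsto_compose[OF Tcontx[OF t] lim lC]) (use xF F_sub in \<open>auto intro!: always_eventually\<close>)
    moreover have "(\<lambda>n. T t (x n)) = x" using xF t by (auto simp: Fix_rep_def)
    ultimately show ?thesis using lim LIMSEQ_unique by metis
  qed
  then show "l \<in> F" using lC by (simp add: Fix_rep_def)
qed

lemma F_convex: "convex F"
  unfolding convex_def
proof (intro ballI allI impI)
  fix x y and u v :: real assume x: "x \<in> F" and y: "y \<in> F" and u: "0 \<le> u" and v: "0 \<le> v" and uv: "u + v = 1"
  let ?z = "u *\<^sub>R x + v *\<^sub>R y"
  have xC: "x \<in> C" and yC: "y \<in> C" using x y F_sub by auto
  have zC: "?z \<in> C" using cvC xC yC u v uv unfolding convex_def by blast
  have "T t ?z = ?z" if t: "0 \<le> t" for t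
  proof -
    let ?w = "T t ?z"
    have "norm (?w - x) \<le> norm (?z - x)"
      using Tne[OF t zC xC] F_fix[OF x t] by (simp add: dist_norm)
    also have "?z - x = v *\<^sub>R (y - x)" using uv by (simp add: algebra_simps flip: scaleR_add_left)
    finally have wx: "norm (?w - x) \<le> v * norm (x - y)" using v by (simp add: norm_minus_commute)
    have "norm (?w - y) \<le> norm (?z - y)"
      using Tne[OF t zC yC] F_fix[OF y t] by (simp add: dist_norm)
    also have "?z - y = u *\<^sub>R (x - y)" using uv by (simp add: algebra_simps flip: scaleR_add_left)
    finally have wy: "norm (?w - y) \<le> u * norm (x - y)" using u by simp
    have "(norm (?w - ?z))\<^sup>2 = u * (norm (?w - x))\<^sup>2 + v * (norm (?w - y))\<^sup>2 - u * v * (norm (x - y))\<^sup>2"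
      by (rule conv_identity[OF uv])
    also have "\<dots> \<le> u * (v * norm (x - y))\<^sup>2 + v * (u * norm (x - y))\<^sup>2 - u * v * (norm (x - y))\<^sup>2"
      using wx wy u v by (intro diff_right_mono add_mono mult_left_mono power_mono) auto
    also have "\<dots> = u * v * (norm (x - y))\<^sup>2 * (u + v - 1)" by (simp add: algebra_simps power2_eq_square)
    also have "\<dots> = 0" using uv by simp
    finally show ?thesis by simp
  qed
  then show "?z \<in> F" using zC by (simp add: Fix_rep_def)
qed

lemma F_compact: "compact F"
proof -
  have "compact (C \<inter> F)" by (rule compact_Int_closed[OF cC F_closed])
  then show ?thesis using F_sub by (simp add: Int_absorb1)
qed

lemma A_fix:
  assumes a: "0 < a" and q: "q \<in> F"
  shows "avg_integral T a q = q"
proof (rule inner_all_eq)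
  fix y
  have qC: "q \<in> C" using q F_sub by auto
  have "integral {0..a} (\<lambda>t. inner (T t q) y) = integral {0..a} (\<lambda>t. inner q y)"
    by (rule integral_cong) (use F_fix[OF q] in auto)
  then show "inner (avg_integral T a q) y = inner q y"
    using A_char[OF qC, of a y] a by simp
qed

end

context sgrp
begin

lemma variance:
  assumes x: "x \<in> C" and a: "0 < a"
  shows "integral {0..a} (\<lambda>s. (norm (T s x - y))\<^sup>2)
    = integral {0..a} (\<lambda>s. (norm (T s x - avg_integral T a x))\<^sup>2) + a * (norm (avg_integral T a x - y))\<^sup>2"
proof -
  let ?u = "avg_integral T a x"
  let ?c0 = "(norm (?u - y))\<^sup>2 - 2 * inner ?u (?u - y)"
  have i1: "(\<lambda>s. (norm (T s x - ?u))\<^sup>2) integrable_on {0..a}"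
    by (rule integrable_continuous_interval) (intro continuous_intros Tcont_ab x)
  have i3: "(\<lambda>s. 2 * inner (T s x) (?u - y)) integrable_on {0..a}"
    by (rule integrable_continuous_interval) (intro continuous_intros Tcont_ab x)
  have i2: "(\<lambda>s. 2 * inner (T s x) (?u - y) + ?c0) integrable_on {0..a}"
    by (rule integrable_continuous_interval) (intro continuous_intros Tcont_ab x)
  have "integral {0..a} (\<lambda>s. (norm (T s x - y))\<^sup>2)
      = integral {0..a} (\<lambda>s. (norm (T s x - ?u))\<^sup>2 + (2 * inner (T s x) (?u - y) + ?c0))"
    by (rule integral_cong) (rule sq_expand)
  also have "\<dots> = integral {0..a} (\<lambda>s. (norm (T s x - ?u))\<^sup>2) + integral {0..a} (\<lambda>s. 2 * inner (T s x) (?u - y) + ?c0)"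
    by (rule integral_add[OF i1 i2])
  also have "integral {0..a} (\<lambda>s. 2 * inner (T s x) (?u - y) + ?c0)
      = integral {0..a} (\<lambda>s. 2 * inner (T s x) (?u - y)) + integral {0..a} (\<lambda>s. ?c0)"
    by (rule integral_add[OF i3 integrable_const_ivl])
  also have "integral {0..a} (\<lambda>s. 2 * inner (T s x) (?u - y)) = 2 * integral {0..a} (\<lambda>s. inner (T s x) (?u - y))"
    by simp
  also have "integral {0..a} (\<lambda>s. inner (T s x) (?u - y)) = a * inner ?u (?u - y)"
    by (rule A_int_eq[OF x a])
  also have "integral {0..a} (\<lambda>s. ?c0) = a * ?c0" using a by simp
  finally show ?thesis by (simp add: algebra_simps)
qed

lemma key:
  assumes x: "x \<in> C" and a: "0 < a" and h: "0 \<le> h"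
    and D: "\<And>p q. p \<in> C \<Longrightarrow> q \<in> C \<Longrightarrow> dist p q \<le> D"
  shows "a * (norm (avg_integral T a x - T h (avg_integral T a x)))\<^sup>2 \<le> h * D\<^sup>2"
proof -
  let ?u = "avg_integral T a x"
  let ?v = "T h ?u"
  have uC: "?u \<in> C" by (rule A_in[OF a x])
  have vC: "?v \<in> C" by (rule Tin[OF h uC])
  show ?thesis
  proof (cases "h \<le> a")
    case False
    have "norm (?u - ?v) \<le> D" using D[OF uC vC] by (simp add: dist_norm)
    then have "(norm (?u - ?v))\<^sup>2 \<le> D\<^sup>2" by (simp add: power_mono)
    then have "a * (norm (?u - ?v))\<^sup>2 \<le> a * D\<^sup>2" using a by (simp add: mult_left_mono)
    also have "a * D\<^sup>2 \<le> h * D\<^sup>2" using False by (simp add: mult_right_mono)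
    finally show ?thesis .
  next
    case True
    define \<phi> where "\<phi> y s = (norm (T s x - y))\<^sup>2" for y s
    have c\<phi>: "continuous_on {0..} (\<phi> y)" for y unfolding \<phi>_def by (intro continuous_intros Tcont x)
    have i\<phi>: "\<phi> y integrable_on {p..q}" if "0 \<le> p" for y p q
      by (rule integrable_continuous_interval, rule continuous_on_subset[OF c\<phi>]) (use that in auto)
    have V: "integral {0..a} (\<phi> ?v) = integral {0..a} (\<phi> ?u) + a * (norm (?u - ?v))\<^sup>2"
      unfolding \<phi>_def by (rule variance[OF x a])
    have split: "integral {0..a} (\<phi> ?v) = integral {0..h} (\<phi> ?v) + integral {h..a} (\<phi> ?v)"
      using Henstock_Kurzweil_Integration.integral_combine[where a=0 and c=h and b=a and f="\<phi> ?v"] h True i\<phi>[of 0] by auto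
    have A1: "integral {0..h} (\<phi> ?v) \<le> integral {0..h} (\<lambda>s. D\<^sup>2)"
    proof (rule integral_le)
      show "\<phi> ?v integrable_on {0..h}" by (rule i\<phi>) simp
      fix s assume s: "s \<in> {0..h}"
      have "norm (T s x - ?v) \<le> D" using D[OF Tin[OF _ x] vC, of s] s by (simp add: dist_norm)
      then show "\<phi> ?v s \<le> D\<^sup>2" unfolding \<phi>_def by (simp add: power_mono)
    qed (rule integrable_const_ivl)
    have A1': "integral {0..h} (\<lambda>s. D\<^sup>2) = h * D\<^sup>2" using h by simp
    have cs: "continuous_on {h..a} (\<lambda>s. \<phi> ?u (s - h))"
      by (rule continuous_on_compose2[OF c\<phi>[of ?u]]) (auto intro!: continuous_intros)
    have A2: "integral {h..a} (\<phi> ?v) \<le> integral {h..a} (\<lambda>s. \<phi> ?u (s - h))"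
    proof (rule integral_le)
      show "\<phi> ?v integrable_on {h..a}" by (rule i\<phi>) (rule h)
      show "(\<lambda>s. \<phi> ?u (s - h)) integrable_on {h..a}" by (rule integrable_continuous_interval[OF cs])
      fix s assume s: "s \<in> {h..a}"
      then have sh: "0 \<le> s - h" by simp
      have "T s x = T (h + (s - h)) x" by simp
      also have "\<dots> = T h (T (s - h) x)" by (rule Tsg[OF h sh x])
      finally have "norm (T s x - ?v) \<le> norm (T (s - h) x - ?u)"
        using Tne[OF h Tin[OF sh x] uC] by (simp add: dist_norm)
      then show "\<phi> ?v s \<le> \<phi> ?u (s - h)" unfolding \<phi>_def by (simp add: power_mono)
    qed
    have A3: "integral {h..a} (\<lambda>s. \<phi> ?u (s - h)) = integral {0..a-h} (\<phi> ?u)"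
    proof -
      have "(\<lambda>s. \<phi> ?u (s - h)) = \<phi> ?u \<circ> (+) (-h)" by (auto simp: fun_eq_iff)
      then show ?thesis using integral_shift_Icc_real[of h a "\<phi> ?u" "-h"] by simp
    qed
    have A4: "integral {0..a-h} (\<phi> ?u) \<le> integral {0..a} (\<phi> ?u)"
    proof -
      have "integral {0..a-h} (\<phi> ?u) + integral {a-h..a} (\<phi> ?u) = integral {0..a} (\<phi> ?u)"
        using Henstock_Kurzweil_Integration.integral_combine[where a=0 and c="a-h" and b=a and f="\<phi> ?u"] h True i\<phi>[of 0] by auto
      moreover have "0 \<le> integral {a-h..a} (\<phi> ?u)"
        by (rule integral_nonneg) (use True i\<phi> in \<open>auto simp: \<phi>_def\<close>)
      ultimately show ?thesis by simp
    qed
    show ?thesis using V split A1 A1' A2 A3 A4 by linarith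
  qed
qed

end

context sgrp
begin

lemma single:
  fixes f :: "'a \<Rightarrow> 'a" and \<epsilon> a :: "nat \<Rightarrow> real"
  assumes Fne: "F \<noteq> {}"
    and fc: "contraction_on C \<alpha> f"
    and eps: "\<And>n. 0 < \<epsilon> n \<and> \<epsilon> n < 1" and eps0: "\<epsilon> \<longlonglongrightarrow> 0"
    and apos: "\<And>n. 0 < a n" and ainf: "filterlim a at_top sequentially"
  shows "\<exists>P p. sunny_nonexp_retraction C F P \<and> (\<forall>Q. sunny_nonexp_retraction C F Q \<longrightarrow> (\<forall>y\<in>C. Q y = P y))
    \<and> p \<in> C
    \<and> (\<forall>n. \<exists>w\<in>C. w = \<epsilon> n *\<^sub>R f w + (1 - \<epsilon> n) *\<^sub>R avg_integral T (a n) w)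
    \<and> (\<forall>z. (\<forall>n. z n \<in> C \<and> z n = \<epsilon> n *\<^sub>R f (z n) + (1 - \<epsilon> n) *\<^sub>R avg_integral T (a n) (z n))
          \<longrightarrow> z \<longlonglongrightarrow> P p)"
proof -
  have \<alpha>0: "0 \<le> \<alpha>" and \<alpha>1: "\<alpha> < 1" and fC: "\<And>x. x \<in> C \<Longrightarrow> f x \<in> C"
    and fL: "\<And>x y. x \<in> C \<Longrightarrow> y \<in> C \<Longrightarrow> dist (f x) (f y) \<le> \<alpha> * dist x y"
    using fc unfolding contraction_on_def by auto
  have FC: "F \<subseteq> C" by (rule F_sub)
  note Fprops = F_compact F_convex Fne
  let ?P = "proj F"
  have sun: "sunny_nonexp_retraction C F ?P" by (rule proj_sunny_retraction[OF Fprops FC])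
  have uniq: "\<forall>Q. sunny_nonexp_retraction C F Q \<longrightarrow> (\<forall>y\<in>C. Q y = ?P y)"
    using sunny_unique[OF _ cvC] by blast
  have "\<exists>!p\<in>F. (?P \<circ> f) p = p"
  proof (rule Banach_fix[OF compact_imp_complete[OF F_compact] Fne \<alpha>0 \<alpha>1])
    show "(?P \<circ> f) ` F \<subseteq> F" using proj_in[OF Fprops] by auto
    fix x y assume "x \<in> F" "y \<in> F"
    then have "x \<in> C" "y \<in> C" using FC by auto
    then show "dist ((?P \<circ> f) x) ((?P \<circ> f) y) \<le> \<alpha> * dist x y"
      using proj_nonexp[OF Fprops, of "f x" "f y"] fL[of x y] by simp
  qed
  then obtain p where pF: "p \<in> F" and pfix: "?P (f p) = p" by auto
  have pC: "p \<in> C" using pF FC by auto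
  have VIp: "VI F (f p) p" using proj_VI[OF Fprops, of "f p"] pfix by simp
  have Pp: "?P p = p" by (rule proj_id[OF pF])
  have ex: "\<exists>w\<in>C. w = \<epsilon> n *\<^sub>R f w + (1 - \<epsilon> n) *\<^sub>R avg_integral T (a n) w" for n
  proof -
    let ?e = "\<epsilon> n"
    let ?\<Phi> = "\<lambda>w. ?e *\<^sub>R f w + (1 - ?e) *\<^sub>R avg_integral T (a n) w"
    have e: "0 < ?e" "?e < 1" using eps[of n] by auto
    have "\<exists>!w\<in>C. ?\<Phi> w = w"
    proof (rule Banach_fix[OF compact_imp_complete[OF cC] neC, of "?e * \<alpha> + (1 - ?e)"])
      show "0 \<le> ?e * \<alpha> + (1 - ?e)" using e \<alpha>0 by simp
      show "?e * \<alpha> + (1 - ?e) < 1" using e \<alpha>1 by (simp add: mult_strict_left_mono)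
      show "?\<Phi> ` C \<subseteq> C"
      proof
        fix v assume "v \<in> ?\<Phi> ` C"
        then obtain w where w: "w \<in> C" and v: "v = ?\<Phi> w" by auto
        have "f w \<in> C" "avg_integral T (a n) w \<in> C" using fC[OF w] A_in[OF apos w] by auto
        then show "v \<in> C" using cvC e unfolding v convex_def by simp
      qed
      fix x y assume x: "x \<in> C" and y: "y \<in> C"
      have "dist (?\<Phi> x) (?\<Phi> y) = norm (?e *\<^sub>R (f x - f y) + (1 - ?e) *\<^sub>R (avg_integral T (a n) x - avg_integral T (a n) y))"
        by (simp add: dist_norm algebra_simps)
      also have "\<dots> \<le> ?e * norm (f x - f y) + (1 - ?e) * norm (avg_integral T (a n) x - avg_integral T (a n) y)"
        using e by (rule_tac order_trans[OF norm_triangle_ineq]) simp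
      also have "\<dots> \<le> ?e * (\<alpha> * dist x y) + (1 - ?e) * dist x y"
        using fL[OF x y] A_ne[OF apos x y] e
        by (intro add_mono mult_left_mono) (auto simp: dist_norm)
      finally show "dist (?\<Phi> x) (?\<Phi> y) \<le> (?e * \<alpha> + (1 - ?e)) * dist x y"
        by (simp add: algebra_simps)
    qed
    then show ?thesis by (metis (no_types, lifting))
  qed
  define D where "D = diameter C"
  have D: "\<And>p q. p \<in> C \<Longrightarrow> q \<in> C \<Longrightarrow> dist p q \<le> D"
    unfolding D_def by (rule diameter_bounded_bound[OF compact_imp_bounded[OF cC]])
  have conv: "z \<longlonglongrightarrow> p" if zH: "\<forall>n. z n \<in> C \<and> z n = \<epsilon> n *\<^sub>R f (z n) + (1 - \<epsilon> n) *\<^sub>R avg_integral T (a n) (z n)" for z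
  proof -
    define u where "u n = avg_integral T (a n) (z n)" for n
    have zC: "z n \<in> C" for n using zH by auto
    have uC: "u n \<in> C" for n unfolding u_def by (rule A_in[OF apos zC])
    have zeq: "z n = \<epsilon> n *\<^sub>R f (z n) + (1 - \<epsilon> n) *\<^sub>R u n" for n using zH unfolding u_def by auto
    have zu: "(\<lambda>n. z n - u n) \<longlonglongrightarrow> 0"
    proof (rule Lim_null_comparison)
      show "\<forall>\<^sub>F n in sequentially. norm (z n - u n) \<le> \<epsilon> n * D"
      proof (intro always_eventually allI)
        fix n
        have "z n - u n = \<epsilon> n *\<^sub>R (f (z n) - u n)"
          by (subst zeq[of n]) (simp add: algebra_simps)
        then have "norm (z n - u n) = \<epsilon> n * norm (f (z n) - u n)" using eps[of n] by simp
        also have "\<dots> \<le> \<epsilon> n * D"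
          using D[OF fC[OF zC] uC, of n n] eps[of n] by (intro mult_left_mono) (auto simp: dist_norm)
        finally show "norm (z n - u n) \<le> \<epsilon> n * D" .
      qed
      show "(\<lambda>n. \<epsilon> n * D) \<longlonglongrightarrow> 0" using tendsto_mult_left_zero[OF eps0] by simp
    qed
    have Tu: "(\<lambda>n. T h (u n) - u n) \<longlonglongrightarrow> 0" if h: "0 \<le> h" for h
    proof (rule Lim_null_comparison)
      show "\<forall>\<^sub>F n in sequentially. norm (T h (u n) - u n) \<le> sqrt (h * D\<^sup>2 / a n)"
      proof (intro always_eventually allI)
        fix n
        have "a n * (norm (u n - T h (u n)))\<^sup>2 \<le> h * D\<^sup>2"
          unfolding u_def by (rule key[OF zC apos h D])
        then have "(norm (T h (u n) - u n))\<^sup>2 \<le> h * D\<^sup>2 / a n"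
          using apos[of n] by (simp add: field_simps norm_minus_commute)
        then show "norm (T h (u n) - u n) \<le> sqrt (h * D\<^sup>2 / a n)" by (rule real_le_rsqrt)
      qed
      have "(\<lambda>n. h * D\<^sup>2 / a n) \<longlonglongrightarrow> 0"
        by (rule tendsto_divide_0[OF tendsto_const filterlim_at_top_imp_at_infinity[OF ainf]])
      then show "(\<lambda>n. sqrt (h * D\<^sup>2 / a n)) \<longlonglongrightarrow> 0" using tendsto_real_sqrt by fastforce
    qed
    have ineq: "(1 - \<alpha>) * (norm (z n - p))\<^sup>2 \<le> inner (f p - p) (z n - p)" for n
    proof -
      let ?e = "\<epsilon> n"
      have e: "0 < ?e" "?e < 1" using eps[of n] by auto
      have up: "norm (u n - p) \<le> norm (z n - p)"
        using A_ne[OF apos zC pC, of n n] A_fix[OF apos pF, of n] unfolding u_def by (simp add: dist_norm)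
      have zp: "z n - p = ?e *\<^sub>R (f (z n) - p) + (1 - ?e) *\<^sub>R (u n - p)"
        by (subst zeq[of n]) (simp add: algebra_simps)
      have "(norm (z n - p))\<^sup>2 = inner (z n - p) (z n - p)" by (simp add: power2_norm_eq_inner)
      also have "\<dots> = ?e * inner (f (z n) - p) (z n - p) + (1 - ?e) * inner (u n - p) (z n - p)"
        by (subst (1) zp) (simp add: inner_add_left)
      also have "inner (u n - p) (z n - p) \<le> (norm (z n - p))\<^sup>2"
        using norm_cauchy_schwarz[of "u n - p" "z n - p"] up
        by (smt (verit) mult_right_mono norm_ge_zero power2_eq_square)
      then have "(1 - ?e) * inner (u n - p) (z n - p) \<le> (1 - ?e) * (norm (z n - p))\<^sup>2"
        using e by (intro mult_left_mono) auto
      finally have "?e * (norm (z n - p))\<^sup>2 \<le> ?e * inner (f (z n) - p) (z n - p)"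
        by (simp add: algebra_simps)
      then have "(norm (z n - p))\<^sup>2 \<le> inner (f (z n) - p) (z n - p)" using e by simp
      also have "inner (f (z n) - p) (z n - p) = inner (f (z n) - f p) (z n - p) + inner (f p - p) (z n - p)"
        by (simp add: inner_diff_left)
      also have "inner (f (z n) - f p) (z n - p) \<le> \<alpha> * (norm (z n - p))\<^sup>2"
      proof -
        have "inner (f (z n) - f p) (z n - p) \<le> norm (f (z n) - f p) * norm (z n - p)" by (rule norm_cauchy_schwarz)
        also have "\<dots> \<le> (\<alpha> * norm (z n - p)) * norm (z n - p)"
          using fL[OF zC pC, of n] by (intro mult_right_mono) (auto simp: dist_norm)
        finally show ?thesis by (simp add: power2_eq_square mult.assoc)
      qed
      finally show ?thesis by (simp add: algebra_simps)
    qed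
    show "z \<longlonglongrightarrow> p"
    proof (rule compact_subseq_limit[OF cC zC])
      fix r l assume r: "strict_mono r" and l: "(z \<circ> r) \<longlonglongrightarrow> l"
      have "closed C" using cC by (rule compact_imp_closed)
      then have lC: "l \<in> C" using l zC unfolding closed_sequential_limits by (metis comp_apply)
      have zur: "(\<lambda>n. z (r n) - u (r n)) \<longlonglongrightarrow> 0"
        using LIMSEQ_subseq_LIMSEQ[OF zu r] by (simp add: o_def)
      have ur: "(\<lambda>n. u (r n)) \<longlonglongrightarrow> l"
      proof -
        have "(\<lambda>n. z (r n) - (z (r n) - u (r n))) \<longlonglongrightarrow> l - 0"
          using l zur by (intro tendsto_intros) (simp_all add: o_def)
        then show ?thesis by simp
      qed
      have "T h l = l" if h: "0 \<le> h" for h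
      proof -
        have "(\<lambda>n. T h (u (r n))) \<longlonglongrightarrow> T h l"
          by (rule continuous_on_tendsto_compose[OF Tcontx[OF h] ur lC]) (auto intro!: always_eventually uC)
        moreover have "(\<lambda>n. u (r n) + (T h (u (r n)) - u (r n))) \<longlonglongrightarrow> l + 0"
          using ur LIMSEQ_subseq_LIMSEQ[OF Tu[OF h] r] by (intro tendsto_intros) (simp_all add: o_def)
        ultimately show ?thesis using LIMSEQ_unique by fastforce
      qed
      then have lF: "l \<in> F" using lC by (simp add: Fix_rep_def)
      have "(1 - \<alpha>) * (norm (l - p))\<^sup>2 \<le> inner (f p - p) (l - p)"
      proof (rule LIMSEQ_le)
        show "(\<lambda>n. (1 - \<alpha>) * (norm (z (r n) - p))\<^sup>2) \<longlonglongrightarrow> (1 - \<alpha>) * (norm (l - p))\<^sup>2"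
          using l by (intro tendsto_intros) (simp add: o_def)
        show "(\<lambda>n. inner (f p - p) (z (r n) - p)) \<longlonglongrightarrow> inner (f p - p) (l - p)"
          using l by (intro tendsto_intros) (simp add: o_def)
        show "\<exists>N. \<forall>n\<ge>N. (1 - \<alpha>) * (norm (z (r n) - p))\<^sup>2 \<le> inner (f p - p) (z (r n) - p)"
          using ineq by blast
      qed
      also have "inner (f p - p) (l - p) \<le> 0" using VIp lF unfolding VI_def by blast
      finally have "(norm (l - p))\<^sup>2 \<le> 0" using \<alpha>1 by (simp add: mult_le_0_iff)
      then show "l = p" by simp
    qed
  qed
  have conv': "\<forall>z. (\<forall>n. z n \<in> C \<and> z n = \<epsilon> n *\<^sub>R f (z n) + (1 - \<epsilon> n) *\<^sub>R avg_integral T (a n) (z n))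
          \<longrightarrow> z \<longlonglongrightarrow> ?P p"
    using conv unfolding Pp by blast
  show ?thesis
  proof (intro exI conjI)
    show "sunny_nonexp_retraction C F ?P" by (rule sun)
    show "\<forall>Q. sunny_nonexp_retraction C F Q \<longrightarrow> (\<forall>y\<in>C. Q y = ?P y)" by (rule uniq)
    show "p \<in> C" by (rule pC)
    show "\<forall>n. \<exists>w\<in>C. w = \<epsilon> n *\<^sub>R f w + (1 - \<epsilon> n) *\<^sub>R avg_integral T (a n) w" using ex by blast
  qed (rule conv')
qed

end

lemma ex_pair: "\<exists>a b. Q a b \<Longrightarrow> \<exists>p. Q (fst p) (snd p)" by auto

theorem corollary4p2:
  fixes I :: "'i set"
    and C :: "'i \<Rightarrow> 'h::{real_inner, complete_space} set"
    and T :: "'i \<Rightarrow> real \<Rightarrow> 'h \<Rightarrow> 'h"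
    and X :: "(real \<Rightarrow> real) set"
    and f :: "'i \<Rightarrow> 'h \<Rightarrow> 'h"
    and \<alpha> :: "'i \<Rightarrow> real"
    and \<epsilon> :: "nat \<Rightarrow> real"
    and a :: "nat \<Rightarrow> real"
  assumes "I \<noteq> {}"
    and "\<And>i. i \<in> I \<Longrightarrow> C i \<noteq> {} \<and> compact (C i) \<and> convex (C i)"
    and "\<And>i. i \<in> I \<Longrightarrow> nonexp_semigroup_rep (C i) (T i)"
    and "\<And>i. i \<in> I \<Longrightarrow> Fix_rep (C i) (T i) \<noteq> {}"
    and "left_invariant_subspace X"
    and "in_fnspace X (\<lambda>t. 1)"
    and "\<And>i x y. i \<in> I \<Longrightarrow> x \<in> C i \<Longrightarrow> in_fnspace X (\<lambda>t. inner (T i t x) y)"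
    and "\<And>i. i \<in> I \<Longrightarrow> contraction_on (C i) (\<alpha> i) (f i)"
    and "\<And>n. 0 < \<epsilon> n \<and> \<epsilon> n < 1"
    and "\<epsilon> \<longlonglongrightarrow> 0"
    and "\<And>n. 0 < a n"
    and "filterlim a at_top sequentially"
  shows "\<exists>P x. (\<forall>i\<in>I. sunny_nonexp_retraction (C i) (Fix_rep (C i) (T i)) (P i)
                   \<and> (\<forall>Q. sunny_nonexp_retraction (C i) (Fix_rep (C i) (T i)) Q
                          \<longrightarrow> (\<forall>y\<in>C i. Q y = P i y))
                   \<and> x i \<in> C i)
           \<and> (\<forall>n. \<forall>i\<in>I. \<exists>w\<in>C i.
                 w = \<epsilon> n *\<^sub>R f i w + (1 - \<epsilon> n) *\<^sub>R avg_integral (T i) (a n) w)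
           \<and> (\<forall>z :: nat \<Rightarrow> 'i \<Rightarrow> 'h.
                 (\<forall>n. \<forall>i\<in>I. z n i \<in> C i \<and>
                    z n i = \<epsilon> n *\<^sub>R f i (z n i) + (1 - \<epsilon> n) *\<^sub>R avg_integral (T i) (a n) (z n i))
                 \<longrightarrow> limitin (product_topology (\<lambda>i. euclidean) I)
                        (\<lambda>n. restrict (z n) I) (restrict (\<lambda>i. P i (x i)) I) sequentially)"
proof -
  note A = assms
  have wc_gen: "continuous_on {0..} (\<lambda>t. inner (T i t x) y)" if i: "i \<in> I" and x: "x \<in> C i" for i x y
  proof -
    obtain g where gX: "g \<in> X" and g: "\<forall>t\<ge>0. g t = inner (T i t x) y"
      using A(7)[OF i x, of y] unfolding in_fnspace_def by blast
    have "continuous_on {0..} g" using A(5) gX unfolding left_invariant_subspace_def bcont_Rplus_def by blast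
    then show ?thesis by (rule continuous_on_cong[THEN iffD1, rotated 2]) (use g in auto)
  qed
  define Prop where "Prop i Pp \<longleftrightarrow> sunny_nonexp_retraction (C i) (Fix_rep (C i) (T i)) (fst Pp)
      \<and> (\<forall>Q. sunny_nonexp_retraction (C i) (Fix_rep (C i) (T i)) Q \<longrightarrow> (\<forall>y\<in>C i. Q y = fst Pp y))
      \<and> snd Pp \<in> C i
      \<and> (\<forall>n. \<exists>w\<in>C i. w = \<epsilon> n *\<^sub>R f i w + (1 - \<epsilon> n) *\<^sub>R avg_integral (T i) (a n) w)
      \<and> (\<forall>z. (\<forall>n. z n \<in> C i \<and> z n = \<epsilon> n *\<^sub>R f i (z n) + (1 - \<epsilon> n) *\<^sub>R avg_integral (T i) (a n) (z n))
          \<longrightarrow> z \<longlonglongrightarrow> fst Pp (snd Pp))" for i Pp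
  have each: "\<exists>Pp. Prop i Pp" if i: "i \<in> I" for i
  proof -
    interpret S: sgrp "C i" "T i"
    proof
      show "compact (C i)" "convex (C i)" "C i \<noteq> {}" using A(2)[OF i] by auto
      show "nonexp_semigroup_rep (C i) (T i)" by (rule A(3)[OF i])
      show "continuous_on {0..} (\<lambda>t. inner (T i t x) y)" if "x \<in> C i" for x y
        by (rule wc_gen[OF i that])
    qed
    show ?thesis unfolding Prop_def
      by (rule ex_pair[OF S.single[OF A(4)[OF i] A(8)[OF i] A(9) A(10) A(11) A(12)]])
  qed
  have "\<forall>i\<in>I. \<exists>Pp. Prop i Pp" using each by blast
  from bchoice[OF this] obtain G where G: "\<forall>i\<in>I. Prop i (G i)" by blast
  show ?thesis
  proof (intro exI[of _ "\<lambda>i. fst (G i)"] exI[of _ "\<lambda>i. snd (G i)"] conjI)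
    show "\<forall>i\<in>I. sunny_nonexp_retraction (C i) (Fix_rep (C i) (T i)) (fst (G i))
        \<and> (\<forall>Q. sunny_nonexp_retraction (C i) (Fix_rep (C i) (T i)) Q \<longrightarrow> (\<forall>y\<in>C i. Q y = fst (G i) y))
        \<and> snd (G i) \<in> C i" using G unfolding Prop_def by blast
    show "\<forall>n. \<forall>i\<in>I. \<exists>w\<in>C i. w = \<epsilon> n *\<^sub>R f i w + (1 - \<epsilon> n) *\<^sub>R avg_integral (T i) (a n) w"
      using G unfolding Prop_def by blast
    show "\<forall>z :: nat \<Rightarrow> 'i \<Rightarrow> 'h.
                 (\<forall>n. \<forall>i\<in>I. z n i \<in> C i \<and>
                    z n i = \<epsilon> n *\<^sub>R f i (z n i) + (1 - \<epsilon> n) *\<^sub>R avg_integral (T i) (a n) (z n i))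
                 \<longrightarrow> limitin (product_topology (\<lambda>i. euclidean) I)
                        (\<lambda>n. restrict (z n) I) (restrict (\<lambda>i. fst (G i) (snd (G i))) I) sequentially"
    proof (intro allI impI)
      fix z :: "nat \<Rightarrow> 'i \<Rightarrow> 'h"
      assume zH: "\<forall>n. \<forall>i\<in>I. z n i \<in> C i \<and>
                    z n i = \<epsilon> n *\<^sub>R f i (z n i) + (1 - \<epsilon> n) *\<^sub>R avg_integral (T i) (a n) (z n i)"
      show "limitin (product_topology (\<lambda>i. euclidean) I)
                        (\<lambda>n. restrict (z n) I) (restrict (\<lambda>i. fst (G i) (snd (G i))) I) sequentially"
        unfolding limitin_componentwise
      proof (intro conjI ballI)
        show "restrict (\<lambda>i. fst (G i) (snd (G i))) I \<in> extensional I" by simp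
        show "\<forall>\<^sub>F n in sequentially. restrict (z n) I \<in> topspace (product_topology (\<lambda>i. euclidean) I)"
          by (simp add: topspace_product_topology)
        fix i assume i: "i \<in> I"
        have Gi: "\<forall>z. (\<forall>n. z n \<in> C i \<and> z n = \<epsilon> n *\<^sub>R f i (z n) + (1 - \<epsilon> n) *\<^sub>R avg_integral (T i) (a n) (z n))
          \<longrightarrow> z \<longlonglongrightarrow> fst (G i) (snd (G i))"
          using G i unfolding Prop_def by blast
        have "\<forall>n. z n i \<in> C i \<and> z n i = \<epsilon> n *\<^sub>R f i (z n i) + (1 - \<epsilon> n) *\<^sub>R avg_integral (T i) (a n) (z n i)"
          using zH i by blast
        then have "(\<lambda>n. z n i) \<longlonglongrightarrow> fst (G i) (snd (G i))"
          using Gi[rule_format, of "\<lambda>n. z n i"] by blast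
        then show "limitin euclidean (\<lambda>c. restrict (z c) I i) (restrict (\<lambda>i. fst (G i) (snd (G i))) I i) sequentially"
          using i by simp
      qed
    qed
  qed
qed


end
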